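(* Let $i\in\{1,\dots,M\}$, $j\in\{1,\dots,N\}$, and let $e_0=(1,0,0,\dots)^\top$. For every $z\in\mathbb{C}\setminus\mathbb{N}_0$ the following hold: $$(a_i-1)\big({}_iT^{-1}S\big)S^{-1}\,Q(z)=(z+a_i-1)\,{}_iT^{-1}Q(z)-({}_iT^{-1}H_0)\,e_0,$$ $$b_j\big(T_j^{-1}S\big)S^{-1}\,Q(z)=(z+b_j)\,T_j^{-1}Q(z)-(T_j^{-1}H_0)\,e_0,$$ $$\big(T^{-1}S\big)BS^{-1}\big(\Upsilon Q(z-1)-P(z-1)\big)=z\,T^{-1}Q(z)-T^{-1}P(z)-(T^{-1}H_0)\,e_0,$$ where $\Upsilon:=\eta\,\prod_{i=1}^M(a_i-1)\big/\prod_{j=1}^N(b_j-1)$.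
   Context: Fix integers $M,N\ge0$ and parameters $\eta,a_1,\dots,a_M,b_1,\dots,b_N$. Let $w(z)=\frac{(a_1)_z\cdots(a_M)_z}{\Gamma(z+1)(b_1)_z\cdots(b_N)_z}\eta^z$, $(\alpha)_z=\Gamma(\alpha+z)/\Gamma(\alpha)$, on nodes $k\in\mathbb{N}_0$ (so $w(0)=1$), with finite moments $\rho_n=\sum_kk^nw(k)$ and moment matrix $G=(\rho_{n+m})$ admitting the Cholesky factorization $G=S^{-1}HS^{-\top}$ ($S$ lower unitriangular, $H=\operatorname{diag}(H_0,H_1,\dots)$). $P(z)=S\chi(z)$, $\chi(z)=(1,z,z^2,\dots)^\top$, is the vector of monic orthogonal polynomials $P_n$, and $Q(z)=(Q_0(z),Q_1(z),\dots)^\top$ with second kind functions $Q_n(z)=\sum_{k=0}^\infty\frac{P_n(k)w(k)}{z-k}$. $B$ is the lower Pascal matrix $B_{n,m}=\binom nm$. Inverse parameter shifts: ${}_iT^{-1}f$ is $f$ with $a_i$ replaced by $a_i-1$; $T_j^{-1}f$ is $f$ with $b_j$ replaced by $b_j+1$; $T^{-1}f$ is $f$ with every $a_i$ replaced by $a_i-1$ and every $b_j$ by $b_j-1$ (applied to $S,H_0,P,Q$, the weight, etc.). It is assumed that the parameters are such that all these shifted weights are well defined with finite moments and the Cholesky factorizations of all the shifted moment matrices exist. *)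

theory Defs
  imports Complex_Main
begin

definition wgt :: "complex \<Rightarrow> nat \<Rightarrow> (nat \<Rightarrow> complex) \<Rightarrow> nat \<Rightarrow> (nat \<Rightarrow> complex) \<Rightarrow> nat \<Rightarrow> complex" where
  "wgt eta M a N b k =
     (\<Prod>i=1..M. pochhammer (a i) k) / (fact k * (\<Prod>j=1..N. pochhammer (b j) k)) * eta ^ k"

definition finite_moments :: "(nat \<Rightarrow> complex) \<Rightarrow> bool" where
  "finite_moments w \<longleftrightarrow> (\<forall>n. summable (\<lambda>k. norm (of_nat k ^ n * w k)))"

definition moment :: "(nat \<Rightarrow> complex) \<Rightarrow> nat \<Rightarrow> complex" where
  "moment w n = (\<Sum>k. of_nat k ^ n * w k)"

definition moment_matrix :: "(nat \<Rightarrow> complex) \<Rightarrow> nat \<Rightarrow> nat \<Rightarrow> complex" where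
  "moment_matrix w n m = moment w (n + m)"

definition lower_unitriangular :: "(nat \<Rightarrow> nat \<Rightarrow> complex) \<Rightarrow> bool" where
  "lower_unitriangular S \<longleftrightarrow> (\<forall>n. S n n = 1) \<and> (\<forall>n m. n < m \<longrightarrow> S n m = 0)"

fun ltinv :: "(nat \<Rightarrow> nat \<Rightarrow> complex) \<Rightarrow> nat \<Rightarrow> nat \<Rightarrow> complex" where
  "ltinv S n m = (if n < m then 0 else if n = m then 1
                  else - (\<Sum>k\<in>{m..<n}. S n k * ltinv S k m))"

text \<open>Cholesky factorization G = S^{-1} H S^{-T}, S lower unitriangular,
  H = diag(H_0, H_1, ...) with nonzero entries.
  (All matrix products are finite sums since S^{-1} is lower triangular.)\<close>
definition cholesky :: "(nat \<Rightarrow> nat \<Rightarrow> complex) \<Rightarrow> (nat \<Rightarrow> nat \<Rightarrow> complex) \<Rightarrow> (nat \<Rightarrow> complex) \<Rightarrow> bool" where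
  "cholesky G S H \<longleftrightarrow> lower_unitriangular S \<and> (\<forall>n. H n \<noteq> 0) \<and>
     (\<forall>n m. G n m = (\<Sum>k\<le>min n m. ltinv S n k * H k * ltinv S m k))"

definition ltmv :: "(nat \<Rightarrow> nat \<Rightarrow> complex) \<Rightarrow> (nat \<Rightarrow> complex) \<Rightarrow> nat \<Rightarrow> complex" where
  "ltmv A v n = (\<Sum>k\<le>n. A n k * v k)"

definition pascal :: "nat \<Rightarrow> nat \<Rightarrow> complex" where
  "pascal n m = of_nat (n choose m)"

definition polyP :: "(nat \<Rightarrow> nat \<Rightarrow> complex) \<Rightarrow> nat \<Rightarrow> complex \<Rightarrow> complex" where
  "polyP S n z = (\<Sum>k\<le>n. S n k * z ^ k)"

definition funQ :: "(nat \<Rightarrow> nat \<Rightarrow> complex) \<Rightarrow> (nat \<Rightarrow> complex) \<Rightarrow> nat \<Rightarrow> complex \<Rightarrow> complex" where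
  "funQ S w n z = (\<Sum>k. polyP S n (of_nat k) * w k / (z - of_nat k))"

end

theory Submission
  imports Defs
begin


declare ltinv.simps[simp del]

lemma ltinv_lt: "n < m \<Longrightarrow> ltinv A n m = 0"
  by (subst ltinv.simps) simp
lemma ltinv_eq[simp]: "ltinv A n n = 1"
  by (subst ltinv.simps) simp
lemma ltinv_gt: "m < n \<Longrightarrow> ltinv A n m = - (\<Sum>k\<in>{m..<n}. A n k * ltinv A k m)"
  by (subst ltinv.simps) simp

lemma ltinv_gt': "m < n \<Longrightarrow> ltinv A n m = - (\<Sum>k<n. A n k * ltinv A k m)"
proof -
  assume mn: "m < n"
  have "(\<Sum>k<n. A n k * ltinv A k m) = (\<Sum>k\<in>{m..<n}. A n k * ltinv A k m)"
    by (rule sum.mono_neutral_right) (auto simp: ltinv_lt)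
  then show ?thesis using ltinv_gt[OF mn] by simp
qed

lemma lut_lt: "lower_unitriangular A \<Longrightarrow> n < m \<Longrightarrow> A n m = 0"
  by (simp add: lower_unitriangular_def)
lemma lut_eq: "lower_unitriangular A \<Longrightarrow> A n n = 1"
  by (simp add: lower_unitriangular_def)

lemma delta_r: "finite S \<Longrightarrow> (\<Sum>j\<in>S. f j * (if j = m then 1 else 0)) = (if m \<in> S then f m else (0::complex))"
proof -
  have eq: "(\<lambda>j. f j * (if j = m then 1 else 0)) = (\<lambda>j. if m = j then f m else 0)" by auto
  assume "finite S"
  then show ?thesis unfolding eq by (simp add: sum.delta)
qed
lemma delta_l: "finite S \<Longrightarrow> (\<Sum>j\<in>S. (if m = j then 1 else 0) * f j) = (if m \<in> S then f m else (0::complex))"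
proof -
  have eq: "(\<lambda>j. (if m = j then 1 else 0) * f j) = (\<lambda>j. if m = j then f m else 0)" by auto
  assume "finite S"
  then show ?thesis unfolding eq by (simp add: sum.delta)
qed

lemma SX: assumes L: "lower_unitriangular A"
  shows "(\<Sum>k\<le>n. A n k * ltinv A k m) = (if n = m then 1 else 0)"
proof (cases "n < m")
  case True then show ?thesis by (auto intro!: sum.neutral simp: ltinv_lt)
next
  case False
  show ?thesis
  proof (cases "n = m")
    case True
    have "(\<Sum>k\<le>n. A n k * ltinv A k m) = A n n * ltinv A n m + (\<Sum>k<n. A n k * ltinv A k m)"
      by (simp add: lessThan_Suc_atMost[symmetric])
    also have "(\<Sum>k<n. A n k * ltinv A k m) = 0" using True by (auto intro!: sum.neutral simp: ltinv_lt)
    finally show ?thesis using True L by (simp add: lut_eq)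
  next
    case ne: False
    with False have mn: "m < n" by simp
    have "(\<Sum>k\<le>n. A n k * ltinv A k m) = A n n * ltinv A n m + (\<Sum>k<n. A n k * ltinv A k m)"
      by (simp add: lessThan_Suc_atMost[symmetric])
    then show ?thesis using ltinv_gt'[OF mn] L ne by (simp add: lut_eq)
  qed
qed

lemma XS: assumes L: "lower_unitriangular A"
  shows "(\<Sum>k\<le>n. ltinv A n k * A k m) = (if n = m then 1 else 0)"
proof (induction n rule: less_induct)
  case (less n)
  show ?case
  proof (cases "n < m")
    case True then show ?thesis using L by (auto intro!: sum.neutral simp: lut_lt)
  next
    case False
    have split: "(\<Sum>k\<le>n. ltinv A n k * A k m) = A n m + (\<Sum>k<n. ltinv A n k * A k m)"
      using L by (simp add: lessThan_Suc_atMost[symmetric] lut_eq)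
    show ?thesis
    proof (cases "n = m")
      case True
      have "(\<Sum>k<n. ltinv A n k * A k m) = 0" using True L by (auto intro!: sum.neutral simp: lut_lt)
      then show ?thesis using split True L by (simp add: lut_eq)
    next
      case ne: False
      with False have mn: "m < n" by simp
      have "(\<Sum>k<n. ltinv A n k * A k m) = (\<Sum>k<n. - (\<Sum>j<n. A n j * ltinv A j k) * A k m)"
        by (rule sum.cong) (auto simp: ltinv_gt')
      also have "\<dots> = - (\<Sum>k<n. \<Sum>j<n. A n j * (ltinv A j k * A k m))"
        by (simp add: sum_distrib_right sum_negf mult.assoc)
      also have "\<dots> = - (\<Sum>j<n. \<Sum>k<n. A n j * (ltinv A j k * A k m))"
        by (rule arg_cong[where f=uminus], rule sum.swap)
      also have "\<dots> = - (\<Sum>j<n. A n j * (\<Sum>k<n. ltinv A j k * A k m))"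
        by (simp add: sum_distrib_left)
      also have "\<dots> = - (\<Sum>j<n. A n j * (if j = m then 1 else 0))"
      proof -
        have "(\<Sum>k<n. ltinv A j k * A k m) = (if j = m then 1 else 0)" if j: "j < n" for j
        proof -
          have "(\<Sum>k<n. ltinv A j k * A k m) = (\<Sum>k\<le>j. ltinv A j k * A k m)"
            using j by (intro sum.mono_neutral_right) (auto simp: ltinv_lt)
          then show ?thesis using less.IH[OF j] by simp
        qed
        then show ?thesis by (intro arg_cong[where f=uminus] sum.cong) auto
      qed
      also have "\<dots> = - A n m" using mn by (simp add: delta_r)
      finally show ?thesis using split ne by simp
    qed
  qed
qed

lemma ltmv_XS: assumes L: "lower_unitriangular A"
  shows "ltmv (ltinv A) (ltmv A u) n = u n"
proof -
  have "ltmv (ltinv A) (ltmv A u) n = (\<Sum>m\<le>n. ltinv A n m * (\<Sum>l\<le>n. A m l * u l))"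
    unfolding ltmv_def
  proof (rule sum.cong[OF refl])
    fix m assume "m \<in> {..n}"
    then have "(\<Sum>l\<le>m. A m l * u l) = (\<Sum>l\<le>n. A m l * u l)"
      using L by (intro sum.mono_neutral_left) (auto simp: lut_lt)
    then show "ltinv A n m * (\<Sum>k\<le>m. A m k * u k) = ltinv A n m * (\<Sum>l\<le>n. A m l * u l)" by simp
  qed
  also have "\<dots> = (\<Sum>m\<le>n. \<Sum>l\<le>n. ltinv A n m * A m l * u l)"
    by (simp add: sum_distrib_left mult.assoc)
  also have "\<dots> = (\<Sum>l\<le>n. \<Sum>m\<le>n. ltinv A n m * A m l * u l)"
    by (rule sum.swap)
  also have "\<dots> = (\<Sum>l\<le>n. (\<Sum>m\<le>n. ltinv A n m * A m l) * u l)"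
    by (simp add: sum_distrib_right)
  also have "\<dots> = (\<Sum>l\<le>n. (if n = l then 1 else 0) * u l)"
    by (simp add: XS[OF L])
  also have "\<dots> = u n" by (simp add: delta_l)
  finally show ?thesis .
qed

lemma bounded_inv:
  fixes y :: complex
  assumes y: "\<forall>k::nat. y \<noteq> of_nat k"
  shows "\<exists>B. \<forall>k. norm (1 / (y - of_nat k)) \<le> B"
proof -
  define N where "N = nat \<lceil>norm y\<rceil> + 1"
  have big: "norm (1 / (y - of_nat k)) \<le> 1" if "k \<ge> N" for k
  proof -
    have "real N \<ge> norm y + 1" unfolding N_def using real_nat_ceiling_ge[of "norm y"] by simp
    also have "real N \<le> real k" using that by simp
    finally have k1: "norm y + 1 \<le> real k" .
    have "norm (of_nat k :: complex) - norm y \<le> norm (of_nat k - y)" by (rule norm_triangle_ineq2)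
    also have "norm (of_nat k - y) = norm (y - of_nat k)" by (rule norm_minus_commute)
    finally have "1 \<le> norm (y - of_nat k)" using k1 by simp
    then show ?thesis by (simp add: norm_divide divide_le_eq)
  qed
  have "norm (1 / (y - of_nat k)) \<le> 1 + (\<Sum>j<N. norm (1 / (y - of_nat j)))" for k
  proof (cases "k < N")
    case True
    have "norm (1 / (y - of_nat k)) \<le> (\<Sum>j<N. norm (1 / (y - of_nat j)))"
      by (rule member_le_sum[where f="\<lambda>j. norm (1 / (y - of_nat j))"]) (use True in auto)
    then show ?thesis by simp
  next
    case False
    then have "norm (1 / (y - of_nat k)) \<le> 1" by (intro big) simp
    moreover have "0 \<le> (\<Sum>j<N. norm (1 / (y - of_nat j)))" by (intro sum_nonneg) simp
    ultimately show ?thesis by simp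
  qed
  then show ?thesis by blast
qed

lemma summable_wg:
  assumes v: "finite_moments v" and g: "\<forall>k. norm (g k) \<le> B"
  shows "summable (\<lambda>k. of_nat k ^ l * v k * g k)"
proof (rule summable_comparison_test'[where g = "\<lambda>k. norm (of_nat k ^ l * v k) * B" and N = 0])
  show "summable (\<lambda>k. norm (of_nat k ^ l * v k) * B)"
    using v unfolding finite_moments_def by (intro summable_mult2) simp
  fix k :: nat
  show "norm (of_nat k ^ l * v k * g k) \<le> norm (of_nat k ^ l * v k) * B"
    unfolding norm_mult[of "of_nat k ^ l * v k"] using g by (intro mult_left_mono) auto
qed

lemma L1:
  assumes v: "finite_moments v" and g: "\<forall>k. norm (g k) \<le> B"
  shows "(\<lambda>k. polyP A n (of_nat k) * v k * g k) sums ltmv A (\<lambda>l. \<Sum>k. of_nat k ^ l * v k * g k) n"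
proof -
  have "(\<lambda>k. \<Sum>l\<le>n. A n l * (of_nat k ^ l * v k * g k)) sums (\<Sum>l\<le>n. A n l * (\<Sum>k. of_nat k ^ l * v k * g k))"
    by (intro sums_sum sums_mult summable_sums summable_wg[OF v g])
  moreover have "(\<lambda>k. polyP A n (of_nat k) * v k * g k) = (\<lambda>k. \<Sum>l\<le>n. A n l * (of_nat k ^ l * v k * g k))"
    by (simp add: polyP_def sum_distrib_left sum_distrib_right mult_ac)
  ultimately show ?thesis unfolding ltmv_def by simp
qed

lemma ortho:
  assumes ch: "cholesky (moment_matrix v) A Hv" and v: "finite_moments v"
  shows "(\<lambda>k. polyP A n (of_nat k) * v k) sums (if n = 0 then Hv 0 else 0)"
proof -
  have L: "lower_unitriangular A" using ch by (simp add: cholesky_def)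
  have "(\<lambda>k. polyP A n (of_nat k) * v k * 1) sums ltmv A (\<lambda>l. \<Sum>k. of_nat k ^ l * v k * 1) n"
    by (rule L1[OF v, of _ 1]) simp
  moreover have "(\<Sum>k. of_nat k ^ l * v k * 1) = ltinv A l 0 * Hv 0" for l
  proof -
    have "(\<Sum>k. of_nat k ^ l * v k * 1) = moment_matrix v l 0" by (simp add: moment_matrix_def moment_def)
    also have "\<dots> = ltinv A l 0 * Hv 0" using ch by (simp add: cholesky_def)
    finally show ?thesis .
  qed
  moreover have "ltmv A (\<lambda>l. ltinv A l 0 * Hv 0) n = (\<Sum>l\<le>n. A n l * ltinv A l 0) * Hv 0"
    by (simp add: ltmv_def sum_distrib_left sum_distrib_right mult_ac)
  ultimately show ?thesis using SX[OF L, of n 0] by (cases "n = 0") simp_all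
qed

lemma poch_a: "((a::complex) - 1) * pochhammer a k = (of_nat k + a - 1) * pochhammer (a - 1) k"
proof -
  have "pochhammer (a-1) (Suc k) = (a-1) * pochhammer (a - 1 + 1) k" by (rule pochhammer_rec)
  moreover have "pochhammer (a-1) (Suc k) = (a - 1 + of_nat k) * pochhammer (a-1) k" by (rule pochhammer_rec')
  ultimately show ?thesis by (simp add: algebra_simps)
qed

lemma poch_b: "(b::complex) * pochhammer (b + 1) k = (of_nat k + b) * pochhammer b k"
  using pochhammer_rec[of b k] pochhammer_rec'[of b k] by (simp add: algebra_simps)

lemma wgt_i:
  assumes i: "i \<in> {1..M}"
  shows "(a i - 1) * wgt eta M a N b k = (of_nat k + a i - 1) * wgt eta M (a(i := a i - 1)) N b k"
proof -
  define R where "R = (\<Prod>l\<in>{1..M} - {i}. pochhammer (a l) k)"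
  define D where "D = fact k * (\<Prod>j=1..N. pochhammer (b j) k)"
  have p1: "(\<Prod>l=1..M. pochhammer (a l) k) = pochhammer (a i) k * R"
    unfolding R_def using i by (simp add: prod.remove)
  have p2: "(\<Prod>l=1..M. pochhammer ((a(i := a i - 1)) l) k) = pochhammer (a i - 1) k * R"
    unfolding R_def using i by (simp add: prod.remove)
  show ?thesis unfolding wgt_def p1 p2 D_def[symmetric]
    using poch_a[of "a i" k]
    by (metis (no_types, lifting) mult.assoc times_divide_eq_right)
qed

lemma poch_nz:
  assumes "\<forall>m::nat. (x::complex) \<noteq> - of_nat m"
  shows "pochhammer x k \<noteq> 0"
  using assms by (auto simp: pochhammer_eq_0_iff)

lemma wgt_j:
  assumes j: "j \<in> {1..N}"
    and b_wd: "\<forall>l\<in>{1..N}. \<forall>k::nat. b l \<noteq> - of_nat k \<and> b l - 1 \<noteq> - of_nat k"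
  shows "b j * wgt eta M a N b k = (of_nat k + b j) * wgt eta M a N (b(j := b j + 1)) k"
proof -
  define R where "R = (\<Prod>l\<in>{1..N} - {j}. pochhammer (b l) k)"
  define PA where "PA = (\<Prod>l=1..M. pochhammer (a l) k)"
  have p1: "(\<Prod>l=1..N. pochhammer (b l) k) = pochhammer (b j) k * R"
    unfolding R_def using j by (simp add: prod.remove)
  have p2: "(\<Prod>l=1..N. pochhammer ((b(j := b j + 1)) l) k) = pochhammer (b j + 1) k * R"
    unfolding R_def using j by (simp add: prod.remove)
  have nzR: "R \<noteq> 0" unfolding R_def using b_wd by (auto intro!: poch_nz)
  have nz1: "pochhammer (b j) k \<noteq> 0" using b_wd j by (auto intro!: poch_nz)
  have nz2: "pochhammer (b j + 1) k \<noteq> 0"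
  proof (rule poch_nz, intro allI notI)
    fix m :: nat assume "b j + 1 = - of_nat m"
    then have "b j = - of_nat m - 1" by (metis add_diff_cancel_right')
    then have "b j = - of_nat (Suc m)" by (simp add: of_nat_Suc)
    then show False using b_wd j by blast
  qed
  have nzf: "(fact k :: complex) \<noteq> 0" by simp
  show ?thesis
  proof -
    have bnz: "b j \<noteq> 0" using b_wd j by (metis neg_0_equal_iff_equal of_nat_0)
    have kb: "of_nat k + b j \<noteq> 0" using b_wd j by (metis add.commute add_eq_0_iff)
    have p1eq: "pochhammer (b j + 1) k = (of_nat k + b j) * pochhammer (b j) k / b j"
      using poch_b[of "b j" k] bnz by (simp add: field_simps)
    define c where "c = of_nat k + b j"
    have kc: "c \<noteq> 0" using kb c_def by simp
    show ?thesis unfolding wgt_def p1 p2 PA_def[symmetric] p1eq c_def[symmetric]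
      using nzR nz1 bnz kc nzf by (simp add: field_simps)
  qed
qed

lemma wgt_T:
  assumes b_wd: "\<forall>l\<in>{1..N}. \<forall>k::nat. b l \<noteq> - of_nat k \<and> b l - 1 \<noteq> - of_nat k"
  shows "eta * (\<Prod>l=1..M. a l - 1) / (\<Prod>l=1..N. b l - 1) * wgt eta M a N b k
     = of_nat (Suc k) * wgt eta M (\<lambda>l. a l - 1) N (\<lambda>l. b l - 1) (Suc k)"
proof -
  have pr: "pochhammer (x - 1) (Suc k) = (x - 1) * pochhammer x k" for x :: complex
    using pochhammer_rec[of "x - 1" k] by simp
  define A1 where "A1 = (\<Prod>l=1..M. a l - 1)"
  define B1 where "B1 = (\<Prod>l=1..N. b l - 1)"
  define PA where "PA = (\<Prod>l=1..M. pochhammer (a l) k)"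
  define PB where "PB = (\<Prod>l=1..N. pochhammer (b l) k)"
  have e1: "(\<Prod>l=1..M. pochhammer (a l - 1) (Suc k)) = A1 * PA"
    unfolding A1_def PA_def pr by (rule prod.distrib)
  have e2: "(\<Prod>l=1..N. pochhammer (b l - 1) (Suc k)) = B1 * PB"
    unfolding B1_def PB_def pr by (rule prod.distrib)
  have "b l - 1 \<noteq> 0" if "l \<in> {1..N}" for l
    using b_wd that by (metis neg_0_equal_iff_equal of_nat_0)
  then have nzB1: "B1 \<noteq> 0" unfolding B1_def by simp
  have nzPB: "PB \<noteq> 0" unfolding PB_def using b_wd by (auto intro!: poch_nz)
  have nzf: "(fact k :: complex) \<noteq> 0" by simp
  show ?thesis
  proof -
    have "(1 + of_nat k :: complex) \<noteq> 0" "(of_nat k + 1 :: complex) \<noteq> 0"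
      by (metis of_nat_Suc of_nat_eq_0_iff nat.distinct(1) add.commute)+
    define sk where "sk = (of_nat (Suc k) :: complex)"
    have sknz: "sk \<noteq> 0" unfolding sk_def by (metis of_nat_eq_0_iff nat.distinct(1))
    have fs: "(fact (Suc k) :: complex) = sk * fact k" unfolding sk_def by (rule fact_Suc)
    show ?thesis unfolding wgt_def e1 e2 A1_def[symmetric] B1_def[symmetric] PA_def[symmetric] PB_def[symmetric]
       fs sk_def[symmetric]
      using nzB1 nzPB nzf sknz by (simp add: field_simps)
  qed
qed

definition Cf :: "(nat \<Rightarrow> complex) \<Rightarrow> complex \<Rightarrow> nat \<Rightarrow> complex" where
  "Cf v z l = (\<Sum>k. of_nat k ^ l * v k * (1 / (z - of_nat k)))"

lemma Q_sums:
  assumes v: "finite_moments v" and z: "\<forall>k::nat. z \<noteq> of_nat k"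
  shows "(\<lambda>k. polyP S n (of_nat k) * v k * (1 / (z - of_nat k))) sums funQ S v n z"
    and "funQ S v n z = ltmv S (Cf v z) n"
proof -
  obtain B where B: "\<forall>k. norm (1 / (z - of_nat k)) \<le> B" using bounded_inv[OF z] by blast
  have s: "(\<lambda>k. polyP S n (of_nat k) * v k * (1 / (z - of_nat k))) sums ltmv S (Cf v z) n"
    unfolding Cf_def by (rule L1[OF v B])
  have "funQ S v n z = (\<Sum>k. polyP S n (of_nat k) * v k * (1 / (z - of_nat k)))"
    by (simp add: funQ_def)
  also have "\<dots> = ltmv S (Cf v z) n" using s by (rule sums_unique[symmetric])
  finally show "funQ S v n z = ltmv S (Cf v z) n" .
  with s show "(\<lambda>k. polyP S n (of_nat k) * v k * (1 / (z - of_nat k))) sums funQ S v n z" by simp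
qed

lemma claim_gen:
  assumes v: "finite_moments v" and vi: "finite_moments vi" and L: "lower_unitriangular S"
    and chi: "cholesky (moment_matrix vi) Si Hi"
    and rel: "\<forall>k. c * v k = (of_nat k + c) * vi k"
    and z: "\<forall>k::nat. z \<noteq> of_nat k"
  shows "c * ltmv Si (ltmv (ltinv S) (\<lambda>m. funQ S v m z)) n
         = (z + c) * funQ Si vi n z - (if n = 0 then Hi 0 else 0)"
proof -
  have "ltmv (ltinv S) (\<lambda>m. funQ S v m z) = Cf v z"
    using ltmv_XS[OF L, of "Cf v z"] by (simp add: Q_sums(2)[OF v z] fun_eq_iff)
  then have lhs: "c * ltmv Si (ltmv (ltinv S) (\<lambda>m. funQ S v m z)) n = c * ltmv Si (Cf v z) n" by simp
  have s1: "(\<lambda>k. c * (polyP Si n (of_nat k) * v k * (1 / (z - of_nat k)))) sums (c * ltmv Si (Cf v z) n)"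
  proof -
    obtain B where B: "\<forall>k. norm (1 / (z - of_nat k)) \<le> B" using bounded_inv[OF z] by blast
    show ?thesis unfolding Cf_def by (intro sums_mult L1[OF v B])
  qed
  have s2: "(\<lambda>k. (z + c) * (polyP Si n (of_nat k) * vi k * (1 / (z - of_nat k))) - polyP Si n (of_nat k) * vi k)
      sums ((z + c) * funQ Si vi n z - (if n = 0 then Hi 0 else 0))"
    by (intro sums_diff sums_mult Q_sums(1)[OF vi z] ortho[OF chi vi])
  have eq: "c * (polyP Si n (of_nat k) * v k * (1 / (z - of_nat k)))
     = (z + c) * (polyP Si n (of_nat k) * vi k * (1 / (z - of_nat k))) - polyP Si n (of_nat k) * vi k" for k
  proof -
    have d: "z - of_nat k \<noteq> 0" using z by simp
    have "c * (polyP Si n (of_nat k) * v k * (1 / (z - of_nat k))) = polyP Si n (of_nat k) * (c * v k) / (z - of_nat k)"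
      by simp
    also have "\<dots> = polyP Si n (of_nat k) * ((of_nat k + c) * vi k) / (z - of_nat k)" using rel by simp
    also have "\<dots> = (z + c) * (polyP Si n (of_nat k) * vi k * (1 / (z - of_nat k))) - polyP Si n (of_nat k) * vi k"
      using d by (simp add: field_simps)
    finally show ?thesis .
  qed
  from s1 s2 have "c * ltmv Si (Cf v z) n = (z + c) * funQ Si vi n z - (if n = 0 then Hi 0 else 0)"
    unfolding eq by (rule sums_unique2)
  with lhs show ?thesis by simp
qed

lemma bounded_kz:
  fixes z :: complex
  assumes z: "\<forall>k::nat. z \<noteq> of_nat k"
  shows "\<exists>B. \<forall>k. norm (of_nat k / (z - of_nat k)) \<le> B"
proof -
  obtain B where B: "\<forall>k. norm (1 / (z - of_nat k)) \<le> B" using bounded_inv[OF z] by blast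
  have "norm (of_nat k / (z - of_nat k)) \<le> norm z * B + 1" for k
  proof -
    have d: "z - of_nat k \<noteq> 0" using z by simp
    have "of_nat k / (z - of_nat k) = z * (1 / (z - of_nat k)) - 1" using d by (simp add: field_simps)
    then have "norm (of_nat k / (z - of_nat k)) \<le> norm (z * (1 / (z - of_nat k))) + norm (1::complex)"
      by (metis norm_triangle_ineq4)
    also have "norm (z * (1 / (z - of_nat k))) \<le> norm z * B"
      unfolding norm_mult using B by (intro mult_left_mono) auto
    finally show ?thesis by simp
  qed
  then show ?thesis by blast
qed

lemma claim3:
  assumes v: "finite_moments v" and vT: "finite_moments vT" and L: "lower_unitriangular S"
    and chT: "cholesky (moment_matrix vT) ST HT"
    and rel: "\<forall>k. U * v k = of_nat (Suc k) * vT (Suc k)"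
    and z: "\<forall>k::nat. z \<noteq> of_nat k"
  shows "ltmv ST (ltmv pascal (ltmv (ltinv S) (\<lambda>m. U * funQ S v m (z - 1) - polyP S m (z - 1)))) n
     = z * funQ ST vT n z - polyP ST n z - (if n = 0 then HT 0 else 0)"
proof -
  have z1: "\<forall>k::nat. z - 1 \<noteq> of_nat k"
  proof (intro allI notI)
    fix k :: nat assume "z - 1 = of_nat k"
    then have "z = of_nat (Suc k)" by (simp add: of_nat_Suc algebra_simps)
    then show False using z by blast
  qed
  define u where "u l = U * Cf v (z - 1) l - (z - 1) ^ l" for l
  have arg: "(\<lambda>m. U * funQ S v m (z - 1) - polyP S m (z - 1)) = ltmv S u"
  proof
    fix m
    show "U * funQ S v m (z - 1) - polyP S m (z - 1) = ltmv S u m"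
      unfolding Q_sums(2)[OF v z1] polyP_def ltmv_def u_def
      by (simp add: sum_distrib_left sum_subtractf algebra_simps)
  qed
  have X: "ltmv (ltinv S) (ltmv S u) = u" using ltmv_XS[OF L] by (simp add: fun_eq_iff)
  obtain B1 where B1: "\<forall>k. norm (1 / ((z - 1) - of_nat k)) \<le> B1" using bounded_inv[OF z1] by blast
  obtain B2 where B2: "\<forall>k. norm (of_nat k / (z - of_nat k)) \<le> B2" using bounded_kz[OF z] by blast
  define E where "E l = (\<Sum>k. of_nat k ^ l * vT k * (of_nat k / (z - of_nat k)))" for l
  have pas: "ltmv pascal u l = E l - z ^ l" for l
  proof -
    define F where "F k = of_nat k ^ l * vT k * (of_nat k / (z - of_nat k))" for k
    have "F sums E l" unfolding F_def E_def by (intro summable_sums summable_wg[OF vT B2])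
    then have sF: "(\<lambda>k. F (Suc k)) sums E l" by (subst sums_Suc_iff) (simp add: F_def)
    have s1: "(\<lambda>k. \<Sum>m\<le>l. pascal l m * (U * (of_nat k ^ m * v k * (1 / ((z - 1) - of_nat k)))))
       sums (\<Sum>m\<le>l. pascal l m * (U * Cf v (z - 1) m))"
      unfolding Cf_def by (intro sums_sum sums_mult summable_sums summable_wg[OF v B1])
    have teq: "(\<Sum>m\<le>l. pascal l m * (U * (of_nat k ^ m * v k * (1 / ((z - 1) - of_nat k))))) = F (Suc k)" for k
    proof -
      have "(\<Sum>m\<le>l. pascal l m * (U * (of_nat k ^ m * v k * (1 / ((z - 1) - of_nat k)))))
          = (\<Sum>m\<le>l. of_nat (l choose m) * of_nat k ^ m * 1 ^ (l - m)) * (U * v k) * (1 / ((z - 1) - of_nat k))"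
        by (simp add: pascal_def sum_distrib_left sum_distrib_right sum_divide_distrib mult_ac)
      also have "(\<Sum>m\<le>l. of_nat (l choose m) * of_nat k ^ m * 1 ^ (l - m)) = (of_nat k + 1 :: complex) ^ l"
        by (rule binomial_ring[symmetric])
      also have "(of_nat k + 1 :: complex) = of_nat (Suc k)" by simp
      also have "U * v k = of_nat (Suc k) * vT (Suc k)" using rel by simp
      also have "(z - 1) - of_nat k = z - of_nat (Suc k)" by (simp add: of_nat_Suc algebra_simps)
      finally show ?thesis by (simp add: F_def mult_ac diff_diff_eq)
    qed
    have "(\<Sum>m\<le>l. pascal l m * (U * Cf v (z - 1) m)) = E l"
      using s1 sF unfolding teq by (rule sums_unique2)
    moreover have "(\<Sum>m\<le>l. pascal l m * (z - 1) ^ m) = z ^ l"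
    proof -
      have "(\<Sum>m\<le>l. pascal l m * (z - 1) ^ m) = (\<Sum>m\<le>l. of_nat (l choose m) * (z - 1) ^ m * 1 ^ (l - m))"
        by (simp add: pascal_def)
      also have "\<dots> = ((z - 1) + 1) ^ l" by (rule binomial_ring[symmetric])
      finally show ?thesis by simp
    qed
    ultimately show ?thesis unfolding ltmv_def u_def
      by (simp add: right_diff_distrib sum_subtractf)
  qed
  have lhs: "ltmv ST (ltmv pascal (ltmv (ltinv S) (\<lambda>m. U * funQ S v m (z - 1) - polyP S m (z - 1)))) n
      = ltmv ST E n - polyP ST n z"
  proof -
    have pf: "ltmv pascal u = (\<lambda>l. E l - z ^ l)" using pas by (simp add: fun_eq_iff)
    show ?thesis unfolding arg X pf
      by (simp add: ltmv_def polyP_def right_diff_distrib sum_subtractf)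
  qed
  have sE: "(\<lambda>k. polyP ST n (of_nat k) * vT k * (of_nat k / (z - of_nat k))) sums ltmv ST E n"
    unfolding E_def by (rule L1[OF vT B2])
  have s2: "(\<lambda>k. polyP ST n (of_nat k) * vT k * (of_nat k / (z - of_nat k)) + polyP ST n (of_nat k) * vT k)
     sums (ltmv ST E n + (if n = 0 then HT 0 else 0))"
    by (intro sums_add sE ortho[OF chT vT])
  have s3: "(\<lambda>k. z * (polyP ST n (of_nat k) * vT k * (1 / (z - of_nat k)))) sums (z * funQ ST vT n z)"
    by (intro sums_mult Q_sums(1)[OF vT z])
  have teq: "z * (polyP ST n (of_nat k) * vT k * (1 / (z - of_nat k)))
     = polyP ST n (of_nat k) * vT k * (of_nat k / (z - of_nat k)) + polyP ST n (of_nat k) * vT k" for k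
  proof -
    have d: "z - of_nat k \<noteq> 0" using z by simp
    then show ?thesis by (simp add: field_simps)
  qed
  have "z * funQ ST vT n z = ltmv ST E n + (if n = 0 then HT 0 else 0)"
    using s3 s2 unfolding teq by (rule sums_unique2)
  with lhs show ?thesis by simp
qed



theorem mainTheorem5:
  fixes eta :: complex and M N :: nat and a b :: "nat \<Rightarrow> complex" and i j :: nat
    and S Si Sj ST :: "nat \<Rightarrow> nat \<Rightarrow> complex" and H Hi Hj HT :: "nat \<Rightarrow> complex"
    and z :: complex
  assumes i: "i \<in> {1..M}" and j: "j \<in> {1..N}"
    and b_wd: "\<forall>l\<in>{1..N}. \<forall>k::nat. b l \<noteq> - of_nat k \<and> b l - 1 \<noteq> - of_nat k"
    and mom: "finite_moments (wgt eta M a N b)"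
    and mom_i: "finite_moments (wgt eta M (a(i := a i - 1)) N b)"
    and mom_j: "finite_moments (wgt eta M a N (b(j := b j + 1)))"
    and mom_T: "finite_moments (wgt eta M (\<lambda>l. a l - 1) N (\<lambda>l. b l - 1))"
    and chol: "cholesky (moment_matrix (wgt eta M a N b)) S H"
    and chol_i: "cholesky (moment_matrix (wgt eta M (a(i := a i - 1)) N b)) Si Hi"
    and chol_j: "cholesky (moment_matrix (wgt eta M a N (b(j := b j + 1)))) Sj Hj"
    and chol_T: "cholesky (moment_matrix (wgt eta M (\<lambda>l. a l - 1) N (\<lambda>l. b l - 1))) ST HT"
    and z: "\<forall>k::nat. z \<noteq> of_nat k"
  shows "\<forall>n.
      (a i - 1) * ltmv Si (ltmv (ltinv S) (\<lambda>m. funQ S (wgt eta M a N b) m z)) n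
        = (z + a i - 1) * funQ Si (wgt eta M (a(i := a i - 1)) N b) n z
          - (if n = 0 then Hi 0 else 0)
    \<and> b j * ltmv Sj (ltmv (ltinv S) (\<lambda>m. funQ S (wgt eta M a N b) m z)) n
        = (z + b j) * funQ Sj (wgt eta M a N (b(j := b j + 1))) n z
          - (if n = 0 then Hj 0 else 0)
    \<and> ltmv ST (ltmv pascal (ltmv (ltinv S)
          (\<lambda>m. eta * (\<Prod>l=1..M. a l - 1) / (\<Prod>l=1..N. b l - 1)
                 * funQ S (wgt eta M a N b) m (z - 1) - polyP S m (z - 1)))) n
        = z * funQ ST (wgt eta M (\<lambda>l. a l - 1) N (\<lambda>l. b l - 1)) n z
          - polyP ST n z - (if n = 0 then HT 0 else 0)"
proof (intro allI conjI)
  fix n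
  have L: "lower_unitriangular S" using chol by (simp add: cholesky_def)
  have r1: "\<forall>k. (a i - 1) * wgt eta M a N b k = (of_nat k + (a i - 1)) * wgt eta M (a(i := a i - 1)) N b k"
    using wgt_i[OF i] by (simp add: add_diff_eq)
  have "(a i - 1) * ltmv Si (ltmv (ltinv S) (\<lambda>m. funQ S (wgt eta M a N b) m z)) n
        = (z + (a i - 1)) * funQ Si (wgt eta M (a(i := a i - 1)) N b) n z - (if n = 0 then Hi 0 else 0)"
    by (rule claim_gen[OF mom mom_i L chol_i r1 z])
  then show "(a i - 1) * ltmv Si (ltmv (ltinv S) (\<lambda>m. funQ S (wgt eta M a N b) m z)) n
        = (z + a i - 1) * funQ Si (wgt eta M (a(i := a i - 1)) N b) n z - (if n = 0 then Hi 0 else 0)"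
    by (simp add: add_diff_eq)
  have r2: "\<forall>k. b j * wgt eta M a N b k = (of_nat k + b j) * wgt eta M a N (b(j := b j + 1)) k"
    using wgt_j[OF j b_wd] by simp
  show "b j * ltmv Sj (ltmv (ltinv S) (\<lambda>m. funQ S (wgt eta M a N b) m z)) n
        = (z + b j) * funQ Sj (wgt eta M a N (b(j := b j + 1))) n z - (if n = 0 then Hj 0 else 0)"
    by (rule claim_gen[OF mom mom_j L chol_j r2 z])
  have r3: "\<forall>k. eta * (\<Prod>l=1..M. a l - 1) / (\<Prod>l=1..N. b l - 1) * wgt eta M a N b k
     = of_nat (Suc k) * wgt eta M (\<lambda>l. a l - 1) N (\<lambda>l. b l - 1) (Suc k)"
    using wgt_T[OF b_wd] by simp
  show "ltmv ST (ltmv pascal (ltmv (ltinv S)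
          (\<lambda>m. eta * (\<Prod>l=1..M. a l - 1) / (\<Prod>l=1..N. b l - 1)
                 * funQ S (wgt eta M a N b) m (z - 1) - polyP S m (z - 1)))) n
        = z * funQ ST (wgt eta M (\<lambda>l. a l - 1) N (\<lambda>l. b l - 1)) n z
          - polyP ST n z - (if n = 0 then HT 0 else 0)"
    by (rule claim3[OF mom mom_T L chol_T r3 z])
qed

end
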